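(* For every finite set of ground terms $\Gamma$ and ground term $M$, the judgment $\Gamma\vdash M$ is derivable in the natural deduction system $\mathcal N$ if and only if the sequent $\downarrow\Gamma\vdash\downarrow M$ is derivable in the sequent system $\mathcal S$.
   Context: Fix countably infinite sets of names and variables and the constructors $\mathsf{pub}$ (unary) and $\mathsf{sign},\mathsf{blind},\langle\cdot,\cdot\rangle,\{\cdot\}_{\cdot}$ (binary). Let $E$ be an equational theory whose signature $\Sigma_E$ is disjoint from the constructors, containing at most one associative-commutative (AC) binary symbol $\oplus$, and presented by a rewrite system $R_E$ that is terminating and confluent modulo AC of $\oplus$. Terms: names, variables, $\mathsf{pub}(M)$, $\mathsf{sign}(M,N)$, $\mathsf{blind}(M,N)$, $\langle M,N\rangle$, $\{M\}_N$, $g(M_1,\dots,M_j)$ with $g\in\Sigma_E$. $\equiv$ is equality modulo AC of $\oplus$, $\approx_E$ equality modulo $E$, $\downarrow M$ the $R_E$-normal form of $M$ modulo AC, $\downarrow\Gamma=\{\downarrow N\mid N\in\Gamma\}$. A term is guarded if it is a name, a variable, or headed by a constructor. An $E$-context is a term with holes built only from function symbols of $\Sigma_E$. $\Gamma,M$ means $\Gamma\cup\{M\}$. System $\mathcal N$ (judgments $\Gamma\vdash M$): ($id$) $\Gamma\vdash M$ if $M\in\Gamma$; ($e_E$) from $\Gamma\vdash\{M\}_K$, $\Gamma\vdash K$ infer $\Gamma\vdash M$; ($e_I$) from $\Gamma\vdash M$, $\Gamma\vdash K$ infer $\Gamma\vdash\{M\}_K$; ($p_E$) from $\Gamma\vdash\langle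 M,N\rangle$ infer $\Gamma\vdash M$, and also infer $\Gamma\vdash N$; ($p_I$) from $\Gamma\vdash M$, $\Gamma\vdash N$ infer $\Gamma\vdash\langle M,N\rangle$; ($\mathsf{sign}_E$) from $\Gamma\vdash\mathsf{sign}(M,K)$, $\Gamma\vdash\mathsf{pub}(K)$ infer $\Gamma\vdash M$; ($\mathsf{sign}_I$) from $\Gamma\vdash M$, $\Gamma\vdash K$ infer $\Gamma\vdash\mathsf{sign}(M,K)$; ($\mathsf{blind}_{E1}$) from $\Gamma\vdash\mathsf{blind}(M,K)$, $\Gamma\vdash K$ infer $\Gamma\vdash M$; ($\mathsf{blind}_I$) from $\Gamma\vdash M$, $\Gamma\vdash K$ infer $\Gamma\vdash\mathsf{blind}(M,K)$; ($\mathsf{blind}_{E2}$) from $\Gamma\vdash\mathsf{sign}(\mathsf{blind}(M,R),K)$, $\Gamma\vdash R$ infer $\Gamma\vdash\mathsf{sign}(M,K)$; ($g_I$, $g\in\Sigma_E$) from $\Gamma\vdash M_1,\dots,\Gamma\vdash M_j$ infer $\Gamma\vdash g(M_1,\dots,M_j)$; ($\approx$) from $\Gamma\vdash N$ infer $\Gamma\vdash M$ if $M\approx_E N$. System $\mathcal S$ (sequents all of whose terms are in normal form): (id) $\Gamma\vdash M$ with no premise if $M\approx_E C[M_1,\dots,M_k]$ for some $E$-context $C$ and $M_i\in\Gamma$; (cut) from $\Gamma\vdash M$, $\Gamma,M\vdash T$ infer $\Gamma\vdash T$; ($p_L$) from $\Gamma,\langle M,N\rangle,M,N\vdash T$ infer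 $\Gamma,\langle M,N\rangle\vdash T$; ($p_R$) from $\Gamma\vdash M$, $\Gamma\vdash N$ infer $\Gamma\vdash\langle M,N\rangle$; ($e_L$) from $\Gamma,\{M\}_K\vdash K$ and $\Gamma,\{M\}_K,M,K\vdash N$ infer $\Gamma,\{M\}_K\vdash N$; ($e_R$) from $\Gamma\vdash M$, $\Gamma\vdash K$ infer $\Gamma\vdash\{M\}_K$; ($\mathsf{sign}_L$) from $\Gamma,\mathsf{sign}(M,K),\mathsf{pub}(L),M\vdash N$ infer $\Gamma,\mathsf{sign}(M,K),\mathsf{pub}(L)\vdash N$ provided $K\equiv L$; ($\mathsf{sign}_R$) from $\Gamma\vdash M$, $\Gamma\vdash K$ infer $\Gamma\vdash\mathsf{sign}(M,K)$; ($\mathsf{blind}_{L1}$) from $\Gamma,\mathsf{blind}(M,K)\vdash K$ and $\Gamma,\mathsf{blind}(M,K),M,K\vdash N$ infer $\Gamma,\mathsf{blind}(M,K)\vdash N$; ($\mathsf{blind}_R$) from $\Gamma\vdash M$, $\Gamma\vdash K$ infer $\Gamma\vdash\mathsf{blind}(M,K)$; ($\mathsf{blind}_{L2}$) from $\Gamma,\mathsf{sign}(\mathsf{blind}(M,R),K)\vdash R$ and $\Gamma,\mathsf{sign}(\mathsf{blind}(M,R),K),\mathsf{sign}(M,K),R\vdash N$ infer $\Gamma,\mathsf{sign}(\mathsf{blind}(M,R),K)\vdash N$; ($gs$) from $\Gamma\vdash A$, $\Gamma,A\vdash M$ infer $\Gamma\vdash M$, provided $A$ is a guarded subterm of a term in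 $\Gamma\cup\{M\}$. *)

theory Defs
  imports Main
begin

text \<open>Pub, Sign, Blind, Pair, Enc are the constructors pub, sign, blind, pairing, and
  symmetric encryption (Enc M K stands for {M}_K).  Fn g Ms is g(M1,...,Mj) for a
  symbol g of the equational signature Sigma_E, which is the type 'f; hence Sigma_E
  is disjoint from the constructors by construction.\<close>

datatype 'f trm =
    Nm nat
  | Var nat
  | Pub "'f trm"
  | Sign "'f trm" "'f trm"
  | Blind "'f trm" "'f trm"
  | Pair "'f trm" "'f trm"
  | Enc "'f trm" "'f trm"
  | Fn 'f "'f trm list"

fun vars :: "'f trm \<Rightarrow> nat set" where
  "vars (Nm n) = {}"
| "vars (Var x) = {x}"
| "vars (Pub M) = vars M"
| "vars (Sign M N) = vars M \<union> vars N"
| "vars (Blind M N) = vars M \<union> vars N"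
| "vars (Pair M N) = vars M \<union> vars N"
| "vars (Enc M N) = vars M \<union> vars N"
| "vars (Fn g Ms) = \<Union> (vars ` set Ms)"

definition ground :: "'f trm \<Rightarrow> bool" where
  "ground M \<longleftrightarrow> vars M = {}"

fun wf_trm :: "('f \<Rightarrow> nat) \<Rightarrow> 'f trm \<Rightarrow> bool" where
  "wf_trm ar (Nm n) = True"
| "wf_trm ar (Var x) = True"
| "wf_trm ar (Pub M) = wf_trm ar M"
| "wf_trm ar (Sign M N) = (wf_trm ar M \<and> wf_trm ar N)"
| "wf_trm ar (Blind M N) = (wf_trm ar M \<and> wf_trm ar N)"
| "wf_trm ar (Pair M N) = (wf_trm ar M \<and> wf_trm ar N)"
| "wf_trm ar (Enc M N) = (wf_trm ar M \<and> wf_trm ar N)"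
| "wf_trm ar (Fn g Ms) = (length Ms = ar g \<and> (\<forall>M\<in>set Ms. wf_trm ar M))"

text \<open>Terms over Sigma_E and variables only (the language of E and R_E).\<close>
fun eterm :: "'f trm \<Rightarrow> bool" where
  "eterm (Var x) = True"
| "eterm (Fn g Ms) = (\<forall>M\<in>set Ms. eterm M)"
| "eterm _ = False"

fun subst :: "(nat \<Rightarrow> 'f trm) \<Rightarrow> 'f trm \<Rightarrow> 'f trm" where
  "subst \<sigma> (Nm n) = Nm n"
| "subst \<sigma> (Var x) = \<sigma> x"
| "subst \<sigma> (Pub M) = Pub (subst \<sigma> M)"
| "subst \<sigma> (Sign M N) = Sign (subst \<sigma> M) (subst \<sigma> N)"
| "subst \<sigma> (Blind M N) = Blind (subst \<sigma> M) (subst \<sigma> N)"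
| "subst \<sigma> (Pair M N) = Pair (subst \<sigma> M) (subst \<sigma> N)"
| "subst \<sigma> (Enc M N) = Enc (subst \<sigma> M) (subst \<sigma> N)"
| "subst \<sigma> (Fn g Ms) = Fn g (map (subst \<sigma>) Ms)"

fun subterms :: "'f trm \<Rightarrow> 'f trm set" where
  "subterms (Nm n) = {Nm n}"
| "subterms (Var x) = {Var x}"
| "subterms (Pub M) = insert (Pub M) (subterms M)"
| "subterms (Sign M N) = insert (Sign M N) (subterms M \<union> subterms N)"
| "subterms (Blind M N) = insert (Blind M N) (subterms M \<union> subterms N)"
| "subterms (Pair M N) = insert (Pair M N) (subterms M \<union> subterms N)"
| "subterms (Enc M N) = insert (Enc M N) (subterms M \<union> subterms N)"
| "subterms (Fn g Ms) = insert (Fn g Ms) (\<Union> (subterms ` set Ms))"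

fun guarded :: "'f trm \<Rightarrow> bool" where
  "guarded (Fn g Ms) = False"
| "guarded _ = True"

inductive ctx_cl :: "('f trm \<Rightarrow> 'f trm \<Rightarrow> bool) \<Rightarrow> 'f trm \<Rightarrow> 'f trm \<Rightarrow> bool"
  for r where
  root: "r s t \<Longrightarrow> ctx_cl r s t"
| pub: "ctx_cl r s t \<Longrightarrow> ctx_cl r (Pub s) (Pub t)"
| sign1: "ctx_cl r s t \<Longrightarrow> ctx_cl r (Sign s u) (Sign t u)"
| sign2: "ctx_cl r s t \<Longrightarrow> ctx_cl r (Sign u s) (Sign u t)"
| blind1: "ctx_cl r s t \<Longrightarrow> ctx_cl r (Blind s u) (Blind t u)"
| blind2: "ctx_cl r s t \<Longrightarrow> ctx_cl r (Blind u s) (Blind u t)"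
| pair1: "ctx_cl r s t \<Longrightarrow> ctx_cl r (Pair s u) (Pair t u)"
| pair2: "ctx_cl r s t \<Longrightarrow> ctx_cl r (Pair u s) (Pair u t)"
| enc1: "ctx_cl r s t \<Longrightarrow> ctx_cl r (Enc s u) (Enc t u)"
| enc2: "ctx_cl r s t \<Longrightarrow> ctx_cl r (Enc u s) (Enc u t)"
| fn: "ctx_cl r s t \<Longrightarrow> i < length Ms \<Longrightarrow> ctx_cl r (Fn g (Ms[i := s])) (Fn g (Ms[i := t]))"

text \<open>Root instances of the associativity and commutativity axioms of the (optional)
  AC symbol; oplus = None means there is no AC symbol.\<close>
fun ac_root :: "'f option \<Rightarrow> 'f trm \<Rightarrow> 'f trm \<Rightarrow> bool" where
  "ac_root None s t = False"
| "ac_root (Some f) s t =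
     (\<exists>x y z. (s = Fn f [x, Fn f [y, z]] \<and> t = Fn f [Fn f [x, y], z])
            \<or> (s = Fn f [Fn f [x, y], z] \<and> t = Fn f [x, Fn f [y, z]])
            \<or> (s = Fn f [x, y] \<and> t = Fn f [y, x]))"

definition ac_eq :: "'f option \<Rightarrow> 'f trm \<Rightarrow> 'f trm \<Rightarrow> bool" where
  "ac_eq oplus = (ctx_cl (ac_root oplus))\<^sup>*\<^sup>*"

definition rstep :: "('f trm \<times> 'f trm) set \<Rightarrow> 'f trm \<Rightarrow> 'f trm \<Rightarrow> bool" where
  "rstep RE = ctx_cl (\<lambda>s t. \<exists>(l, r)\<in>RE. \<exists>\<sigma>. s = subst \<sigma> l \<and> t = subst \<sigma> r)"

definition rstep_ac :: "'f option \<Rightarrow> ('f trm \<times> 'f trm) set \<Rightarrow> 'f trm \<Rightarrow> 'f trm \<Rightarrow> bool" where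
  "rstep_ac oplus RE s t \<longleftrightarrow> (\<exists>s' t'. ac_eq oplus s s' \<and> rstep RE s' t' \<and> ac_eq oplus t' t)"

text \<open>Equality modulo E: E is presented by RE together with AC of oplus, i.e. =_E is the
  conversion (equivalence) generated by RE-steps and AC-steps.\<close>
definition approxE :: "'f option \<Rightarrow> ('f trm \<times> 'f trm) set \<Rightarrow> 'f trm \<Rightarrow> 'f trm \<Rightarrow> bool" where
  "approxE oplus RE =
     (\<lambda>s t. rstep RE s t \<or> rstep RE t s \<or> ctx_cl (ac_root oplus) s t)\<^sup>*\<^sup>*"

definition normal :: "'f option \<Rightarrow> ('f trm \<times> 'f trm) set \<Rightarrow> 'f trm \<Rightarrow> bool" where
  "normal oplus RE t \<longleftrightarrow> \<not> (\<exists>u. rstep_ac oplus RE t u)"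

text \<open>The normal form \<down>M (some chosen representative of the AC-class of normal forms).\<close>
definition nf :: "'f option \<Rightarrow> ('f trm \<times> 'f trm) set \<Rightarrow> 'f trm \<Rightarrow> 'f trm" where
  "nf oplus RE M = (SOME N. (rstep_ac oplus RE)\<^sup>*\<^sup>* M N \<and> normal oplus RE N)"

definition E_theory :: "('f \<Rightarrow> nat) \<Rightarrow> 'f option \<Rightarrow> ('f trm \<times> 'f trm) set \<Rightarrow> bool" where
  "E_theory ar oplus RE \<longleftrightarrow>
     (\<forall>f. oplus = Some f \<longrightarrow> ar f = 2)
   \<and> (\<forall>(l, r)\<in>RE. eterm l \<and> eterm r \<and> wf_trm ar l \<and> wf_trm ar r
                   \<and> (\<forall>x. l \<noteq> Var x) \<and> vars r \<subseteq> vars l)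
   \<and> wfP (\<lambda>t s. rstep_ac oplus RE s t)
   \<and> (\<forall>s t. approxE oplus RE s t \<longrightarrow>
        (\<exists>s' t'. (rstep_ac oplus RE)\<^sup>*\<^sup>* s s' \<and> (rstep_ac oplus RE)\<^sup>*\<^sup>* t t'
                \<and> ac_eq oplus s' t'))"

section \<open>The natural deduction system N\<close>

inductive Nd :: "('f \<Rightarrow> nat) \<Rightarrow> 'f option \<Rightarrow> ('f trm \<times> 'f trm) set
                  \<Rightarrow> 'f trm set \<Rightarrow> 'f trm \<Rightarrow> bool"
  for ar oplus RE \<Gamma> where
  N_id: "M \<in> \<Gamma> \<Longrightarrow> Nd ar oplus RE \<Gamma> M"
| N_eE: "Nd ar oplus RE \<Gamma> (Enc M K) \<Longrightarrow> Nd ar oplus RE \<Gamma> K \<Longrightarrow> Nd ar oplus RE \<Gamma> M"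
| N_eI: "Nd ar oplus RE \<Gamma> M \<Longrightarrow> Nd ar oplus RE \<Gamma> K \<Longrightarrow> Nd ar oplus RE \<Gamma> (Enc M K)"
| N_pE1: "Nd ar oplus RE \<Gamma> (Pair M N) \<Longrightarrow> Nd ar oplus RE \<Gamma> M"
| N_pE2: "Nd ar oplus RE \<Gamma> (Pair M N) \<Longrightarrow> Nd ar oplus RE \<Gamma> N"
| N_pI: "Nd ar oplus RE \<Gamma> M \<Longrightarrow> Nd ar oplus RE \<Gamma> N \<Longrightarrow> Nd ar oplus RE \<Gamma> (Pair M N)"
| N_signE: "Nd ar oplus RE \<Gamma> (Sign M K) \<Longrightarrow> Nd ar oplus RE \<Gamma> (Pub K) \<Longrightarrow> Nd ar oplus RE \<Gamma> M"
| N_signI: "Nd ar oplus RE \<Gamma> M \<Longrightarrow> Nd ar oplus RE \<Gamma> K \<Longrightarrow> Nd ar oplus RE \<Gamma> (Sign M K)"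
| N_blindE1: "Nd ar oplus RE \<Gamma> (Blind M K) \<Longrightarrow> Nd ar oplus RE \<Gamma> K \<Longrightarrow> Nd ar oplus RE \<Gamma> M"
| N_blindI: "Nd ar oplus RE \<Gamma> M \<Longrightarrow> Nd ar oplus RE \<Gamma> K \<Longrightarrow> Nd ar oplus RE \<Gamma> (Blind M K)"
| N_blindE2: "Nd ar oplus RE \<Gamma> (Sign (Blind M R) K) \<Longrightarrow> Nd ar oplus RE \<Gamma> R
              \<Longrightarrow> Nd ar oplus RE \<Gamma> (Sign M K)"
| N_gI: "length Ms = ar g \<Longrightarrow> (\<forall>M\<in>set Ms. Nd ar oplus RE \<Gamma> M) \<Longrightarrow> Nd ar oplus RE \<Gamma> (Fn g Ms)"
| N_approx: "Nd ar oplus RE \<Gamma> N \<Longrightarrow> approxE oplus RE M N \<Longrightarrow> Nd ar oplus RE \<Gamma> M"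

section \<open>The sequent system S\<close>

inductive_set ectx_cl :: "('f \<Rightarrow> nat) \<Rightarrow> 'f trm set \<Rightarrow> 'f trm set" for ar \<Gamma> where
  hole: "M \<in> \<Gamma> \<Longrightarrow> M \<in> ectx_cl ar \<Gamma>"
| fn: "length Ms = ar g \<Longrightarrow> (\<forall>M\<in>set Ms. M \<in> ectx_cl ar \<Gamma>) \<Longrightarrow> Fn g Ms \<in> ectx_cl ar \<Gamma>"

definition nfseq :: "'f option \<Rightarrow> ('f trm \<times> 'f trm) set \<Rightarrow> 'f trm set \<Rightarrow> 'f trm \<Rightarrow> bool" where
  "nfseq oplus RE \<Gamma> M \<longleftrightarrow> (\<forall>N\<in>\<Gamma>. normal oplus RE N) \<and> normal oplus RE M"

text \<open>Every sequent occurring in a derivation must be in normal form; this is imposed on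
  the conclusion of every rule (premises are derivable sequents, hence in normal form).\<close>
inductive Sq :: "('f \<Rightarrow> nat) \<Rightarrow> 'f option \<Rightarrow> ('f trm \<times> 'f trm) set
                  \<Rightarrow> 'f trm set \<Rightarrow> 'f trm \<Rightarrow> bool"
  for ar oplus RE where
  S_id: "nfseq oplus RE \<Gamma> M \<Longrightarrow> C \<in> ectx_cl ar \<Gamma> \<Longrightarrow> approxE oplus RE M C
         \<Longrightarrow> Sq ar oplus RE \<Gamma> M"
| S_cut: "nfseq oplus RE \<Gamma> T \<Longrightarrow> Sq ar oplus RE \<Gamma> M \<Longrightarrow> Sq ar oplus RE (insert M \<Gamma>) T
         \<Longrightarrow> Sq ar oplus RE \<Gamma> T"
| S_pL: "nfseq oplus RE (insert (Pair M N) \<Gamma>) T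
         \<Longrightarrow> Sq ar oplus RE (insert N (insert M (insert (Pair M N) \<Gamma>))) T
         \<Longrightarrow> Sq ar oplus RE (insert (Pair M N) \<Gamma>) T"
| S_pR: "nfseq oplus RE \<Gamma> (Pair M N) \<Longrightarrow> Sq ar oplus RE \<Gamma> M \<Longrightarrow> Sq ar oplus RE \<Gamma> N
         \<Longrightarrow> Sq ar oplus RE \<Gamma> (Pair M N)"
| S_eL: "nfseq oplus RE (insert (Enc M K) \<Gamma>) N
         \<Longrightarrow> Sq ar oplus RE (insert (Enc M K) \<Gamma>) K
         \<Longrightarrow> Sq ar oplus RE (insert K (insert M (insert (Enc M K) \<Gamma>))) N
         \<Longrightarrow> Sq ar oplus RE (insert (Enc M K) \<Gamma>) N"
| S_eR: "nfseq oplus RE \<Gamma> (Enc M K) \<Longrightarrow> Sq ar oplus RE \<Gamma> M \<Longrightarrow> Sq ar oplus RE \<Gamma> K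
         \<Longrightarrow> Sq ar oplus RE \<Gamma> (Enc M K)"
| S_signL: "nfseq oplus RE (insert (Pub L) (insert (Sign M K) \<Gamma>)) N
         \<Longrightarrow> ac_eq oplus K L
         \<Longrightarrow> Sq ar oplus RE (insert M (insert (Pub L) (insert (Sign M K) \<Gamma>))) N
         \<Longrightarrow> Sq ar oplus RE (insert (Pub L) (insert (Sign M K) \<Gamma>)) N"
| S_signR: "nfseq oplus RE \<Gamma> (Sign M K) \<Longrightarrow> Sq ar oplus RE \<Gamma> M \<Longrightarrow> Sq ar oplus RE \<Gamma> K
         \<Longrightarrow> Sq ar oplus RE \<Gamma> (Sign M K)"
| S_blindL1: "nfseq oplus RE (insert (Blind M K) \<Gamma>) N
         \<Longrightarrow> Sq ar oplus RE (insert (Blind M K) \<Gamma>) K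
         \<Longrightarrow> Sq ar oplus RE (insert K (insert M (insert (Blind M K) \<Gamma>))) N
         \<Longrightarrow> Sq ar oplus RE (insert (Blind M K) \<Gamma>) N"
| S_blindR: "nfseq oplus RE \<Gamma> (Blind M K) \<Longrightarrow> Sq ar oplus RE \<Gamma> M \<Longrightarrow> Sq ar oplus RE \<Gamma> K
         \<Longrightarrow> Sq ar oplus RE \<Gamma> (Blind M K)"
| S_blindL2: "nfseq oplus RE (insert (Sign (Blind M R) K) \<Gamma>) N
         \<Longrightarrow> Sq ar oplus RE (insert (Sign (Blind M R) K) \<Gamma>) R
         \<Longrightarrow> Sq ar oplus RE (insert R (insert (Sign M K) (insert (Sign (Blind M R) K) \<Gamma>))) N
         \<Longrightarrow> Sq ar oplus RE (insert (Sign (Blind M R) K) \<Gamma>) N"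
| S_gs: "nfseq oplus RE \<Gamma> M \<Longrightarrow> Sq ar oplus RE \<Gamma> A \<Longrightarrow> Sq ar oplus RE (insert A \<Gamma>) M
         \<Longrightarrow> guarded A \<Longrightarrow> A \<in> (\<Union>N\<in>insert M \<Gamma>. subterms N)
         \<Longrightarrow> Sq ar oplus RE \<Gamma> M"

end

theory Submission
  imports Defs
begin


lemma ctx_cl_sym: assumes "\<And>s t. r s t \<Longrightarrow> r t s" "ctx_cl r s t" shows "ctx_cl r t s"
  using assms(2) by (induction rule: ctx_cl.induct) (auto intro: ctx_cl.intros assms(1))

lemma ac_root_sym: "ac_root oplus s t \<Longrightarrow> ac_root oplus t s"
  by (cases oplus) auto

definition g0 where "g0 oplus RE = (\<lambda>s t. rstep RE s t \<or> rstep RE t s \<or> ctx_cl (ac_root oplus) s t)"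

lemma approxE_g0: "approxE oplus RE = (g0 oplus RE)\<^sup>*\<^sup>*"
  unfolding approxE_def g0_def by simp

lemma g0_sym: "symp (g0 oplus RE)"
  unfolding g0_def symp_def using ctx_cl_sym[of "ac_root oplus"] ac_root_sym by blast

lemma approxE_sym: "approxE oplus RE s t \<Longrightarrow> approxE oplus RE t s"
  unfolding approxE_g0 by (meson g0_sym symp_rtranclp sympD)

lemma approxE_trans: "approxE oplus RE s t \<Longrightarrow> approxE oplus RE t u \<Longrightarrow> approxE oplus RE s u"
  unfolding approxE_g0 by simp

lemma approxE_refl[simp]: "approxE oplus RE s s"
  unfolding approxE_g0 by simp

lemma ac_eq_approxE: "ac_eq oplus s t \<Longrightarrow> approxE oplus RE s t"
  unfolding ac_eq_def approxE_def
  by (erule rtranclp_mono[THEN predicate2D, rotated]) auto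

lemma rstep_approxE: "rstep RE s t \<Longrightarrow> approxE oplus RE s t"
  unfolding approxE_def by auto

lemma rstep_ac_approxE: "rstep_ac oplus RE s t \<Longrightarrow> approxE oplus RE s t"
  unfolding rstep_ac_def by (meson ac_eq_approxE rstep_approxE approxE_trans)

lemma rstep_ac_rtc_approxE: "(rstep_ac oplus RE)\<^sup>*\<^sup>* s t \<Longrightarrow> approxE oplus RE s t"
  by (induction rule: rtranclp_induct) (auto intro: approxE_trans rstep_ac_approxE)

lemma ac_eq_trans: "ac_eq oplus s t \<Longrightarrow> ac_eq oplus t u \<Longrightarrow> ac_eq oplus s u"
  unfolding ac_eq_def by simp

lemma ac_eq_refl[simp]: "ac_eq oplus s s"
  unfolding ac_eq_def by simp

lemma rtc_lift: assumes "\<And>s t. r s t \<Longrightarrow> r (F s) (F t)" "r\<^sup>*\<^sup>* x y" shows "r\<^sup>*\<^sup>* (F x) (F y)"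
  using assms(2) by (induction rule: rtranclp_induct) (auto intro: rtranclp.rtrancl_into_rtrancl assms(1))

locale ctxF = fixes F :: "'f trm \<Rightarrow> 'f trm"
  assumes F_ctx: "\<And>r s t. ctx_cl r s t \<Longrightarrow> ctx_cl r (F s) (F t)"
begin
lemma ac_eq: "ac_eq oplus x y \<Longrightarrow> ac_eq oplus (F x) (F y)"
  unfolding ac_eq_def by (rule rtc_lift) (auto intro: F_ctx)
lemma rstep: "rstep RE x y \<Longrightarrow> rstep RE (F x) (F y)"
  unfolding rstep_def by (rule F_ctx)
lemma approxE: "approxE oplus RE x y \<Longrightarrow> approxE oplus RE (F x) (F y)"
  unfolding approxE_g0 by (rule rtc_lift) (auto simp: g0_def intro: F_ctx rstep)
lemma rstep_ac: "rstep_ac oplus RE x y \<Longrightarrow> rstep_ac oplus RE (F x) (F y)"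
  unfolding rstep_ac_def using ac_eq rstep by blast
lemma normal: "normal oplus RE (F x) \<Longrightarrow> normal oplus RE x"
  unfolding normal_def using rstep_ac by blast
end

datatype bk = BS | BB | BP | BE

fun mk :: "bk \<Rightarrow> 'f trm \<Rightarrow> 'f trm \<Rightarrow> 'f trm" where
  "mk BS x y = Sign x y" | "mk BB x y = Blind x y" | "mk BP x y = Pair x y" | "mk BE x y = Enc x y"

interpretation L1: ctxF "\<lambda>x. mk b x y"
  by standard (cases b, auto intro: ctx_cl.intros)
interpretation L2: ctxF "\<lambda>y. mk b x y"
  by standard (cases b, auto intro: ctx_cl.intros)
interpretation LP: ctxF "Pub"
  by standard (auto intro: ctx_cl.intros)

lemma ctx_shape:
  assumes "\<forall>s t. r s t \<longrightarrow> (\<exists>f xs. s = Fn f xs)"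
    and "ctx_cl r (mk b x y) t"
  shows "(\<exists>x'. t = mk b x' y \<and> ctx_cl r x x') \<or> (\<exists>y'. t = mk b x y' \<and> ctx_cl r y y')"
proof -
  have nr: "\<not> r (mk b x y) t" using assms(1) by (cases b) fastforce+
  show ?thesis using assms(2) nr by (cases b) (auto elim: ctx_cl.cases)
qed

lemma ctx_shape_pub:
  assumes "\<forall>s t. r s t \<longrightarrow> (\<exists>f xs. s = Fn f xs)"
    and "ctx_cl r (Pub x) t"
  shows "\<exists>x'. t = Pub x' \<and> ctx_cl r x x'"
proof -
  have nr: "\<not> r (Pub x) t" using assms(1) by fastforce
  show ?thesis using assms(2) nr by (auto elim: ctx_cl.cases)
qed

lemma ac_root_Fn: "ac_root oplus s t \<Longrightarrow> \<exists>f xs. s = Fn f xs"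
  by (cases oplus) auto

lemma root_Fn:
  assumes "E_theory ar oplus RE" "\<exists>(l, r)\<in>RE. \<exists>\<sigma>. s = subst \<sigma> l \<and> t = subst \<sigma> r"
  shows "\<exists>f xs. s = Fn f xs"
proof -
  obtain l r \<sigma> where lr: "(l,r) \<in> RE" "s = subst \<sigma> l" using assms(2) by auto
  then have "eterm l" "\<forall>x. l \<noteq> Var x" using assms(1) unfolding E_theory_def by auto
  then obtain f xs where "l = Fn f xs" by (cases l) auto
  then show ?thesis using lr by auto
qed

lemma ac_eq_shape: "ac_eq oplus (mk b x y) t \<Longrightarrow> \<exists>x' y'. t = mk b x' y' \<and> ac_eq oplus x x' \<and> ac_eq oplus y y'"
  unfolding ac_eq_def
proof (induction rule: rtranclp_induct)
  case (step u v)
  then obtain x' y' where u: "u = mk b x' y'" "(ctx_cl (ac_root oplus))\<^sup>*\<^sup>* x x'" "(ctx_cl (ac_root oplus))\<^sup>*\<^sup>* y y'" by blast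
  have cv: "ctx_cl (ac_root oplus) (mk b x' y') v" using step(2) u(1) by simp
  have ac: "\<forall>s t. ac_root oplus s t \<longrightarrow> (\<exists>f xs. s = Fn f xs)" using ac_root_Fn by blast
  from ctx_shape[where r="ac_root oplus", OF ac cv]
  show ?case using u by (auto intro: rtranclp.rtrancl_into_rtrancl)
qed auto

lemma ac_eq_shape_pub: "ac_eq oplus (Pub x) t \<Longrightarrow> \<exists>x'. t = Pub x' \<and> ac_eq oplus x x'"
  unfolding ac_eq_def
proof (induction rule: rtranclp_induct)
  case (step u v)
  then obtain x' where u: "u = Pub x'" "(ctx_cl (ac_root oplus))\<^sup>*\<^sup>* x x'" by blast
  have cv: "ctx_cl (ac_root oplus) (Pub x') v" using step(2) u(1) by simp
  have ac: "\<forall>s t. ac_root oplus s t \<longrightarrow> (\<exists>f xs. s = Fn f xs)" using ac_root_Fn by blast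
  from ctx_shape_pub[where r="ac_root oplus", OF ac cv]
  show ?case using u by (auto intro: rtranclp.rtrancl_into_rtrancl)
qed auto


lemma root_Fn_all:
  assumes "E_theory ar oplus RE"
  shows "\<forall>s t. (\<exists>(l, r)\<in>RE. \<exists>\<sigma>. s = subst \<sigma> l \<and> t = subst \<sigma> r) \<longrightarrow> (\<exists>f xs. s = Fn f xs)"
  using root_Fn[OF assms] by blast

lemma rstep_shape:
  assumes "E_theory ar oplus RE" "rstep RE (mk b x y) t"
  shows "(\<exists>x'. t = mk b x' y \<and> rstep RE x x') \<or> (\<exists>y'. t = mk b x y' \<and> rstep RE y y')"
  using ctx_shape[OF root_Fn_all[OF assms(1)]] assms(2) unfolding rstep_def by blast

lemma rstep_shape_pub:
  assumes "E_theory ar oplus RE" "rstep RE (Pub x) t"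
  shows "\<exists>x'. t = Pub x' \<and> rstep RE x x'"
  using ctx_shape_pub[OF root_Fn_all[OF assms(1)]] assms(2) unfolding rstep_def by blast

lemma rstep_ac_shape:
  assumes "E_theory ar oplus RE" "rstep_ac oplus RE (mk b x y) t"
  shows "\<exists>x' y'. t = mk b x' y' \<and> ((rstep_ac oplus RE x x' \<and> ac_eq oplus y y') \<or> (ac_eq oplus x x' \<and> rstep_ac oplus RE y y'))"
proof -
  obtain s' t' where st: "ac_eq oplus (mk b x y) s'" "rstep RE s' t'" "ac_eq oplus t' t"
    using assms(2) unfolding rstep_ac_def by blast
  obtain x1 y1 where 1: "s' = mk b x1 y1" "ac_eq oplus x x1" "ac_eq oplus y y1"
    using ac_eq_shape[OF st(1)] by blast
  have "rstep RE (mk b x1 y1) t'" using st(2) 1 by simp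
  from rstep_shape[OF assms(1) this]
  show ?thesis
  proof
    assume "\<exists>x'. t' = mk b x' y1 \<and> rstep RE x1 x'"
    then obtain x2 where 2: "t' = mk b x2 y1" "rstep RE x1 x2" by blast
    obtain x3 y3 where 3: "t = mk b x3 y3" "ac_eq oplus x2 x3" "ac_eq oplus y1 y3"
      using ac_eq_shape[of oplus b x2 y1 t] st(3) 2 by blast
    have "rstep_ac oplus RE x x3" unfolding rstep_ac_def using 1 2 3 by blast
    moreover have "ac_eq oplus y y3" using 1 3 ac_eq_trans by blast
    ultimately show ?thesis using 3 by blast
  next
    assume "\<exists>y'. t' = mk b x1 y' \<and> rstep RE y1 y'"
    then obtain y2 where 2: "t' = mk b x1 y2" "rstep RE y1 y2" by blast
    obtain x3 y3 where 3: "t = mk b x3 y3" "ac_eq oplus x1 x3" "ac_eq oplus y2 y3"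
      using ac_eq_shape[of oplus b x1 y2 t] st(3) 2 by blast
    have "rstep_ac oplus RE y y3" unfolding rstep_ac_def using 1 2 3 by blast
    moreover have "ac_eq oplus x x3" using 1 3 ac_eq_trans by blast
    ultimately show ?thesis using 3 by blast
  qed
qed

lemma rstep_ac_shape_pub:
  assumes "E_theory ar oplus RE" "rstep_ac oplus RE (Pub x) t"
  shows "\<exists>x'. t = Pub x' \<and> rstep_ac oplus RE x x'"
proof -
  obtain s' t' where st: "ac_eq oplus (Pub x) s'" "rstep RE s' t'" "ac_eq oplus t' t"
    using assms(2) unfolding rstep_ac_def by blast
  obtain x1 where 1: "s' = Pub x1" "ac_eq oplus x x1"
    using ac_eq_shape_pub[OF st(1)] by blast
  have "rstep RE (Pub x1) t'" using st(2) 1 by simp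
  then obtain x2 where 2: "t' = Pub x2" "rstep RE x1 x2" using rstep_shape_pub[OF assms(1)] by blast
  obtain x3 where 3: "t = Pub x3" "ac_eq oplus x2 x3"
    using ac_eq_shape_pub[of oplus x2 t] st(3) 2 by blast
  have "rstep_ac oplus RE x x3" unfolding rstep_ac_def using 1 2 3 by blast
  then show ?thesis using 3 by blast
qed

lemma normal_mk:
  assumes "E_theory ar oplus RE"
  shows "normal oplus RE (mk b x y) \<longleftrightarrow> normal oplus RE x \<and> normal oplus RE y"
  using L1.normal[of oplus RE b _ y] L2.normal[of oplus RE b x] rstep_ac_shape[OF assms, of b x y]
  unfolding normal_def by blast

lemma normal_pub:
  assumes "E_theory ar oplus RE"
  shows "normal oplus RE (Pub x) \<longleftrightarrow> normal oplus RE x"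
  using LP.normal[of oplus RE x] rstep_ac_shape_pub[OF assms, of x]
  unfolding normal_def by blast

lemma reach_shape:
  assumes "E_theory ar oplus RE" "(rstep_ac oplus RE)\<^sup>*\<^sup>* (mk b x y) t"
  shows "\<exists>x' y'. t = mk b x' y' \<and> approxE oplus RE x x' \<and> approxE oplus RE y y'"
  using assms(2)
proof (induction rule: rtranclp_induct)
  case (step u v)
  then obtain x' y' where u: "u = mk b x' y'" "approxE oplus RE x x'" "approxE oplus RE y y'" by blast
  have "rstep_ac oplus RE (mk b x' y') v" using step u by simp
  from rstep_ac_shape[OF assms(1) this] obtain x2 y2 where
    "v = mk b x2 y2" "approxE oplus RE x' x2" "approxE oplus RE y' y2"
    using ac_eq_approxE rstep_ac_approxE by blast
  then show ?case using u approxE_trans by blast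
qed (use approxE_refl in blast)

lemma reach_shape_pub:
  assumes "E_theory ar oplus RE" "(rstep_ac oplus RE)\<^sup>*\<^sup>* (Pub x) t"
  shows "\<exists>x'. t = Pub x' \<and> approxE oplus RE x x'"
  using assms(2)
proof (induction rule: rtranclp_induct)
  case (step u v)
  then obtain x' where u: "u = Pub x'" "approxE oplus RE x x'" by blast
  have "rstep_ac oplus RE (Pub x') v" using step u by simp
  from rstep_ac_shape_pub[OF assms(1) this] obtain x2 where
    "v = Pub x2" "approxE oplus RE x' x2"
    using rstep_ac_approxE by blast
  then show ?case using u approxE_trans by blast
qed auto

lemma nf_exists:
  assumes "E_theory ar oplus RE"
  shows "\<exists>N. (rstep_ac oplus RE)\<^sup>*\<^sup>* M N \<and> normal oplus RE N"
proof -
  have wf: "wfP (\<lambda>t s. rstep_ac oplus RE s t)" using assms unfolding E_theory_def by blast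
  show ?thesis
  proof (induction M rule: wfp_induct_rule[OF wf])
    case (1 M)
    show ?case
    proof (cases "normal oplus RE M")
      case True then show ?thesis by blast
    next
      case False
      then obtain u where u: "rstep_ac oplus RE M u" unfolding normal_def by blast
      from 1[OF u] obtain N where "(rstep_ac oplus RE)\<^sup>*\<^sup>* u N" "normal oplus RE N" by blast
      then show ?thesis using u by (meson converse_rtranclp_into_rtranclp)
    qed
  qed
qed

lemma nf_props:
  assumes "E_theory ar oplus RE"
  shows "(rstep_ac oplus RE)\<^sup>*\<^sup>* M (nf oplus RE M) \<and> normal oplus RE (nf oplus RE M)"
  unfolding nf_def by (rule someI_ex[OF nf_exists[OF assms]])

lemma nf_approx:
  assumes "E_theory ar oplus RE"
  shows "approxE oplus RE M (nf oplus RE M)"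
  using nf_props[OF assms] rstep_ac_rtc_approxE by blast

lemma normal_rtc: "normal oplus RE a \<Longrightarrow> (rstep_ac oplus RE)\<^sup>*\<^sup>* a s \<Longrightarrow> s = a"
  unfolding normal_def by (auto elim: converse_rtranclpE)

lemma confl:
  assumes "E_theory ar oplus RE" "normal oplus RE a" "normal oplus RE b" "approxE oplus RE a b"
  shows "ac_eq oplus a b"
proof -
  obtain s' t' where "(rstep_ac oplus RE)\<^sup>*\<^sup>* a s'" "(rstep_ac oplus RE)\<^sup>*\<^sup>* b t'" "ac_eq oplus s' t'"
    using assms unfolding E_theory_def by blast
  then show ?thesis using normal_rtc assms(2,3) by metis
qed


definition ra where "ra oplus RE = (\<lambda>a b. rstep_ac oplus RE a b \<or> ac_eq oplus a b)\<^sup>*\<^sup>*"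

lemma ra_approxE: "ra oplus RE a b \<Longrightarrow> approxE oplus RE a b"
  unfolding ra_def
  by (induction rule: rtranclp_induct) (auto intro: approxE_trans rstep_ac_approxE ac_eq_approxE)

lemma rtc_ra: "(rstep_ac oplus RE)\<^sup>*\<^sup>* a b \<Longrightarrow> ra oplus RE a b"
  unfolding ra_def by (erule rtranclp_mono[THEN predicate2D, rotated]) auto

lemma ra_shape:
  assumes "E_theory ar oplus RE" "ra oplus RE (mk b x y) t"
  shows "\<exists>x' y'. t = mk b x' y' \<and> ra oplus RE x x' \<and> ra oplus RE y y'"
  using assms(2) unfolding ra_def
proof (induction rule: rtranclp_induct)
  case (step u v)
  let ?R = "\<lambda>a b. rstep_ac oplus RE a b \<or> ac_eq oplus a b"
  from step obtain x' y' where u: "u = mk b x' y'" "?R\<^sup>*\<^sup>* x x'" "?R\<^sup>*\<^sup>* y y'" by blast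
  from step(2) u(1) have "rstep_ac oplus RE (mk b x' y') v \<or> ac_eq oplus (mk b x' y') v" by simp
  then obtain x2 y2 where "v = mk b x2 y2" "?R\<^sup>*\<^sup>* x' x2" "?R\<^sup>*\<^sup>* y' y2"
  proof
    assume "rstep_ac oplus RE (mk b x' y') v"
    from rstep_ac_shape[OF assms(1) this] show ?thesis using that by blast
  next
    assume "ac_eq oplus (mk b x' y') v"
    from ac_eq_shape[OF this] show ?thesis using that by blast
  qed
  then show ?case using u by (blast intro: rtranclp_trans)
qed (use approxE_refl in blast)

lemma ra_shape_pub:
  assumes "E_theory ar oplus RE" "ra oplus RE (Pub x) t"
  shows "\<exists>x'. t = Pub x' \<and> ra oplus RE x x'"
  using assms(2) unfolding ra_def
proof (induction rule: rtranclp_induct)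
  case (step u v)
  let ?R = "\<lambda>a b. rstep_ac oplus RE a b \<or> ac_eq oplus a b"
  from step obtain x' where u: "u = Pub x'" "?R\<^sup>*\<^sup>* x x'" by blast
  from step(2) u(1) have "rstep_ac oplus RE (Pub x') v \<or> ac_eq oplus (Pub x') v" by simp
  then obtain x2 where "v = Pub x2" "?R\<^sup>*\<^sup>* x' x2"
  proof
    assume "rstep_ac oplus RE (Pub x') v"
    from rstep_ac_shape_pub[OF assms(1) this] show ?thesis using that by blast
  next
    assume "ac_eq oplus (Pub x') v"
    from ac_eq_shape_pub[OF this] show ?thesis using that by blast
  qed
  then show ?case using u by (blast intro: rtranclp_trans)
qed auto

lemma approxE_Fn_pos:
  assumes "approxE oplus RE x y" "i < length Ms"
  shows "approxE oplus RE (Fn g (Ms[i:=x])) (Fn g (Ms[i:=y]))"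
proof -
  interpret ctxF "\<lambda>x. Fn g (Ms[i:=x])" by standard (use assms(2) in \<open>auto intro: ctx_cl.fn\<close>)
  show ?thesis using approxE[OF assms(1)] .
qed

lemma approxE_Fn_aux:
  "list_all2 (approxE oplus RE) Ms Ns \<Longrightarrow> \<forall>pre. approxE oplus RE (Fn g (pre @ Ms)) (Fn g (pre @ Ns))"
proof (induction rule: list_all2_induct)
  case (Cons x xs y ys)
  show ?case
  proof
    fix pre
    have "approxE oplus RE (Fn g ((pre @ x # xs)[length pre := x])) (Fn g ((pre @ x # xs)[length pre := y]))"
      by (rule approxE_Fn_pos) (use Cons in auto)
    then have "approxE oplus RE (Fn g (pre @ x # xs)) (Fn g (pre @ y # xs))" by simp
    moreover have "approxE oplus RE (Fn g ((pre @ [y]) @ xs)) (Fn g ((pre @ [y]) @ ys))" using Cons by blast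
    ultimately show "approxE oplus RE (Fn g (pre @ x # xs)) (Fn g (pre @ y # ys))"
      using approxE_trans by fastforce
  qed
qed simp

lemma approxE_Fn: "list_all2 (approxE oplus RE) Ms Ns \<Longrightarrow> approxE oplus RE (Fn g Ms) (Fn g Ns)"
  using approxE_Fn_aux[of oplus RE Ms Ns g] by (metis append_Nil)

lemma Sq_nfseq: "Sq ar oplus RE \<Gamma> M \<Longrightarrow> nfseq oplus RE \<Gamma> M"
  by (cases rule: Sq.cases) auto

lemma ectx_mono: "C \<in> ectx_cl ar \<Gamma> \<Longrightarrow> \<Gamma> \<subseteq> \<Delta> \<Longrightarrow> C \<in> ectx_cl ar \<Delta>"
  by (induction rule: ectx_cl.induct) (auto intro: ectx_cl.intros)

lemma Sq_eq: "Sq ar oplus RE \<Gamma> M \<Longrightarrow> \<Gamma> = \<Delta> \<Longrightarrow> Sq ar oplus RE \<Delta> M"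
  by simp

lemma Sq_weak: "Sq ar oplus RE \<Gamma> M \<Longrightarrow> normal oplus RE B \<Longrightarrow> Sq ar oplus RE (insert B \<Gamma>) M"
proof (induction rule: Sq.induct)
  case (S_id \<Gamma> M C)
  then show ?case by (intro Sq.S_id[where C=C]) (auto simp: nfseq_def intro: ectx_mono)
next
  case (S_cut \<Gamma> T M)
  show ?case
    apply (rule Sq.S_cut[where M=M])
    using S_cut by (auto simp: nfseq_def intro: Sq_eq)
next
  case (S_pL M N \<Gamma> T)
  show ?case
    apply (rule Sq_eq[OF Sq.S_pL[where M=M and N=N and \<Gamma>="insert B \<Gamma>"]])
    using S_pL by (auto simp: nfseq_def intro: Sq_eq)
next
  case (S_pR \<Gamma> M N)
  then show ?case by (auto simp: nfseq_def intro: Sq.S_pR)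
next
  case (S_eL M K \<Gamma> N)
  show ?case
    apply (rule Sq_eq[OF Sq.S_eL[where M=M and K=K and \<Gamma>="insert B \<Gamma>"]])
    using S_eL by (auto simp: nfseq_def intro: Sq_eq)
next
  case (S_eR \<Gamma> M K)
  then show ?case by (auto simp: nfseq_def intro: Sq.S_eR)
next
  case (S_signL L M K \<Gamma> N)
  show ?case
    apply (rule Sq_eq[OF Sq.S_signL[where L=L and M=M and K=K and \<Gamma>="insert B \<Gamma>"]])
    using S_signL by (auto simp: nfseq_def intro: Sq_eq)
next
  case (S_signR \<Gamma> M K)
  then show ?case by (auto simp: nfseq_def intro: Sq.S_signR)
next
  case (S_blindL1 M K \<Gamma> N)
  show ?case
    apply (rule Sq_eq[OF Sq.S_blindL1[where M=M and K=K and \<Gamma>="insert B \<Gamma>"]])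
    using S_blindL1 by (auto simp: nfseq_def intro: Sq_eq)
next
  case (S_blindR \<Gamma> M K)
  then show ?case by (auto simp: nfseq_def intro: Sq.S_blindR)
next
  case (S_blindL2 M R K \<Gamma> N)
  show ?case
    apply (rule Sq_eq[OF Sq.S_blindL2[where M=M and R=R and K=K and \<Gamma>="insert B \<Gamma>"]])
    using S_blindL2 by (auto simp: nfseq_def intro: Sq_eq)
next
  case (S_gs \<Gamma> M A)
  show ?case
    apply (rule Sq.S_gs[where A=A])
    using S_gs by (auto simp: nfseq_def intro: Sq_eq)
qed


lemma Sq_multicut:
  "(\<forall>x\<in>set xs. Sq ar oplus RE \<Gamma> x) \<Longrightarrow> Sq ar oplus RE (\<Gamma> \<union> set xs) T \<Longrightarrow> nfseq oplus RE \<Gamma> T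
   \<Longrightarrow> Sq ar oplus RE \<Gamma> T"
proof (induction xs arbitrary: \<Gamma>)
  case Nil then show ?case by simp
next
  case (Cons x xs)
  have nx: "normal oplus RE x" using Cons(2) Sq_nfseq[of ar oplus RE \<Gamma> x] unfolding nfseq_def by auto
  have "Sq ar oplus RE (insert x \<Gamma>) T"
  proof (rule Cons(1))
    show "\<forall>y\<in>set xs. Sq ar oplus RE (insert x \<Gamma>) y" using Cons(2) Sq_weak[OF _ nx] by auto
    show "Sq ar oplus RE (insert x \<Gamma> \<union> set xs) T" using Cons(3) by (auto intro: Sq_eq)
    show "nfseq oplus RE (insert x \<Gamma>) T" using Cons(4) nx by (auto simp: nfseq_def)
  qed
  then show ?case using Cons(2,4) by (auto intro: Sq.S_cut)
qed

lemma Sq_idX: "nfseq oplus RE \<Delta> T \<Longrightarrow> X \<in> \<Delta> \<Longrightarrow> approxE oplus RE T X \<Longrightarrow> Sq ar oplus RE \<Delta> T"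
  by (rule Sq.S_id[where C=X]) (auto intro: ectx_cl.hole)

lemma Sq_replace:
  assumes "Sq ar oplus RE \<Gamma> A" "normal oplus RE B" "approxE oplus RE B A"
  shows "Sq ar oplus RE \<Gamma> B"
proof -
  have n: "nfseq oplus RE \<Gamma> A" using Sq_nfseq[OF assms(1)] .
  show ?thesis
    apply (rule Sq.S_cut[where M=A])
    using n assms by (auto simp: nfseq_def intro!: Sq_idX[where X=A])
qed

lemma ectx_Nd: "C \<in> ectx_cl ar \<Delta> \<Longrightarrow> \<forall>N\<in>\<Delta>. Nd ar oplus RE \<Gamma> N \<Longrightarrow> Nd ar oplus RE \<Gamma> C"
  by (induction rule: ectx_cl.induct) (auto intro: Nd.intros)

lemma ac_eq_pub_approx: "ac_eq oplus K L \<Longrightarrow> approxE oplus RE (Pub K) (Pub L)"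
  using ac_eq_approxE LP.approxE by blast

lemma soundness:
  "Sq ar oplus RE \<Delta> T \<Longrightarrow> \<forall>N\<in>\<Delta>. Nd ar oplus RE \<Gamma> N \<Longrightarrow> Nd ar oplus RE \<Gamma> T"
proof (induction rule: Sq.induct)
  case (S_id \<Gamma> M C)
  then show ?case using ectx_Nd Nd.N_approx by blast
next
  case (S_signL L M K \<Gamma> N)
  have "Nd ar oplus RE \<Gamma>' (Pub K)" if "Nd ar oplus RE \<Gamma>' (Pub L)" for \<Gamma>'
    using Nd.N_approx[OF that ac_eq_pub_approx[OF S_signL(2)]] .
  then show ?case using S_signL by (auto intro: Nd.intros)
qed (auto intro: Nd.intros)

context
  fixes ar oplus RE assumes E: "E_theory ar oplus RE"
begin

lemma nf_normal: "normal oplus RE (nf oplus RE M)"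
  using nf_props[OF E] by blast

lemma nf_ra: "ra oplus RE M (nf oplus RE M)"
  using nf_props[OF E] rtc_ra by blast

lemma nf_mk: "\<exists>x y. nf oplus RE (mk b M N) = mk b x y \<and> ra oplus RE M x \<and> ra oplus RE N y
   \<and> normal oplus RE x \<and> normal oplus RE y \<and> normal oplus RE (mk b x y)"
  using ra_shape[OF E nf_ra[of "mk b M N"]] nf_normal[of "mk b M N"] normal_mk[OF E] by metis

lemma nf_pub: "\<exists>x. nf oplus RE (Pub M) = Pub x \<and> ra oplus RE M x \<and> normal oplus RE x"
  using ra_shape_pub[OF E nf_ra[of "Pub M"]] nf_normal[of "Pub M"] normal_pub[OF E] by metis

lemma nf_appr: "approxE oplus RE (nf oplus RE M) M"
  using nf_approx[OF E] approxE_sym by blast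

lemma apx1: "ra oplus RE M x \<Longrightarrow> approxE oplus RE (nf oplus RE M) x"
  using nf_appr ra_approxE approxE_trans by blast

lemma apx2: "ra oplus RE M x \<Longrightarrow> approxE oplus RE x (nf oplus RE M)"
  using apx1 approxE_sym by blast

lemma nfG: "nfseq oplus RE (nf oplus RE ` \<Gamma>) (nf oplus RE M)"
  unfolding nfseq_def using nf_normal by auto

lemma nf_Enc: "\<exists>x y. nf oplus RE (Enc M N) = Enc x y \<and> ra oplus RE M x \<and> ra oplus RE N y
   \<and> normal oplus RE x \<and> normal oplus RE y \<and> normal oplus RE (Enc x y)"
  using nf_mk[of BE M N] by simp
lemma nf_Pair: "\<exists>x y. nf oplus RE (Pair M N) = Pair x y \<and> ra oplus RE M x \<and> ra oplus RE N y
   \<and> normal oplus RE x \<and> normal oplus RE y \<and> normal oplus RE (Pair x y)"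
  using nf_mk[of BP M N] by simp
lemma nf_Sign: "\<exists>x y. nf oplus RE (Sign M N) = Sign x y \<and> ra oplus RE M x \<and> ra oplus RE N y
   \<and> normal oplus RE x \<and> normal oplus RE y \<and> normal oplus RE (Sign x y)"
  using nf_mk[of BS M N] by simp
lemma nf_Blind: "\<exists>x y. nf oplus RE (Blind M N) = Blind x y \<and> ra oplus RE M x \<and> ra oplus RE N y
   \<and> normal oplus RE x \<and> normal oplus RE y \<and> normal oplus RE (Blind x y)"
  using nf_mk[of BB M N] by simp

lemma completeness: "Nd ar oplus RE \<Gamma> M \<Longrightarrow> Sq ar oplus RE (nf oplus RE ` \<Gamma>) (nf oplus RE M)"
proof (induction rule: Nd.induct)
  case (N_id M)
  then show ?case by (intro Sq_idX[where X="nf oplus RE M"] nfG) auto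
next
  case (N_eE M K)
  let ?G = "nf oplus RE ` \<Gamma>"
  obtain x y where h: "nf oplus RE (Enc M K) = Enc x y" "ra oplus RE M x" "ra oplus RE K y"
    "normal oplus RE x" "normal oplus RE y" "normal oplus RE (Enc x y)" using nf_Enc by blast
  have n: "\<forall>N\<in>?G. normal oplus RE N" "normal oplus RE (nf oplus RE M)" using nf_normal by auto
  have s1: "Sq ar oplus RE (insert (Enc x y) ?G) y"
    by (rule Sq_replace[OF Sq_weak[OF N_eE(4)] h(5) apx2[OF h(3)]]) (rule h(6))
  have s2: "Sq ar oplus RE (insert y (insert x (insert (Enc x y) ?G))) (nf oplus RE M)"
    by (rule Sq_idX[where X=x]) (use n h apx1 in \<open>auto simp: nfseq_def\<close>)
  have "Sq ar oplus RE (insert (Enc x y) ?G) (nf oplus RE M)"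
    by (rule Sq.S_eL[OF _ s1 s2]) (use n h in \<open>auto simp: nfseq_def\<close>)
  then show ?case using N_eE(3) h(1) by (auto intro: Sq.S_cut nfG)
next
  case (N_eI M K)
  obtain x y where h: "nf oplus RE (Enc M K) = Enc x y" "ra oplus RE M x" "ra oplus RE K y"
    "normal oplus RE x" "normal oplus RE y" "normal oplus RE (Enc x y)" using nf_Enc by blast
  show ?case unfolding h(1)
    using nfG[of \<Gamma> "Enc M K"] h(1) Sq_replace[OF N_eI(3) h(4) apx2[OF h(2)]] Sq_replace[OF N_eI(4) h(5) apx2[OF h(3)]]
    by (auto intro: Sq.S_eR)
next
  case (N_pE1 M N)
  let ?G = "nf oplus RE ` \<Gamma>"
  obtain x y where h: "nf oplus RE (Pair M N) = Pair x y" "ra oplus RE M x" "ra oplus RE N y"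
    "normal oplus RE x" "normal oplus RE y" "normal oplus RE (Pair x y)" using nf_Pair by blast
  have n: "\<forall>N\<in>?G. normal oplus RE N" "normal oplus RE (nf oplus RE M)" using nf_normal by auto
  have s2: "Sq ar oplus RE (insert y (insert x (insert (Pair x y) ?G))) (nf oplus RE M)"
    by (rule Sq_idX[where X=x]) (use n h apx1 in \<open>auto simp: nfseq_def\<close>)
  have "Sq ar oplus RE (insert (Pair x y) ?G) (nf oplus RE M)"
    by (rule Sq.S_pL[OF _ s2]) (use n h in \<open>auto simp: nfseq_def\<close>)
  then show ?case using N_pE1(2) h(1) by (auto intro: Sq.S_cut nfG)
next
  case (N_pE2 M N)
  let ?G = "nf oplus RE ` \<Gamma>"
  obtain x y where h: "nf oplus RE (Pair M N) = Pair x y" "ra oplus RE M x" "ra oplus RE N y"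
    "normal oplus RE x" "normal oplus RE y" "normal oplus RE (Pair x y)" using nf_Pair by blast
  have n: "\<forall>N\<in>?G. normal oplus RE N" "normal oplus RE (nf oplus RE N)" using nf_normal by auto
  have s2: "Sq ar oplus RE (insert y (insert x (insert (Pair x y) ?G))) (nf oplus RE N)"
    by (rule Sq_idX[where X=y]) (use n h apx1 in \<open>auto simp: nfseq_def\<close>)
  have "Sq ar oplus RE (insert (Pair x y) ?G) (nf oplus RE N)"
    by (rule Sq.S_pL[OF _ s2]) (use n h in \<open>auto simp: nfseq_def\<close>)
  then show ?case using N_pE2(2) h(1) by (auto intro: Sq.S_cut nfG)
next
  case (N_pI M N)
  obtain x y where h: "nf oplus RE (Pair M N) = Pair x y" "ra oplus RE M x" "ra oplus RE N y"
    "normal oplus RE x" "normal oplus RE y" "normal oplus RE (Pair x y)" using nf_Pair by blast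
  show ?case unfolding h(1)
    using nfG[of \<Gamma> "Pair M N"] h(1) Sq_replace[OF N_pI(3) h(4) apx2[OF h(2)]] Sq_replace[OF N_pI(4) h(5) apx2[OF h(3)]]
    by (auto intro: Sq.S_pR)
next
  case (N_signE M K)
  let ?G = "nf oplus RE ` \<Gamma>"
  obtain x y where h: "nf oplus RE (Sign M K) = Sign x y" "ra oplus RE M x" "ra oplus RE K y"
    "normal oplus RE x" "normal oplus RE y" "normal oplus RE (Sign x y)" using nf_Sign by blast
  obtain z where hz: "nf oplus RE (Pub K) = Pub z" "ra oplus RE K z" "normal oplus RE z"
    using nf_pub by blast
  have nPz: "normal oplus RE (Pub z)" using nf_normal hz(1) by metis
  have n: "\<forall>N\<in>?G. normal oplus RE N" "normal oplus RE (nf oplus RE M)" using nf_normal by auto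
  have yz: "approxE oplus RE y z" using h(3) hz(2) ra_approxE approxE_sym approxE_trans by blast
  have ac: "ac_eq oplus y z" using confl[OF E h(5) hz(3) yz] .
  have s2: "Sq ar oplus RE (insert x (insert (Pub z) (insert (Sign x y) ?G))) (nf oplus RE M)"
    by (rule Sq_idX[where X=x]) (use n h nPz apx1 in \<open>auto simp: nfseq_def\<close>)
  have s3: "Sq ar oplus RE (insert (Pub z) (insert (Sign x y) ?G)) (nf oplus RE M)"
    by (rule Sq.S_signL[OF _ ac s2]) (use n h nPz in \<open>auto simp: nfseq_def\<close>)
  have s4: "Sq ar oplus RE (insert (Sign x y) ?G) (Pub z)"
    using Sq_weak[OF N_signE(4) h(6)] hz(1) by simp
  have "Sq ar oplus RE (insert (Sign x y) ?G) (nf oplus RE M)"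
    by (rule Sq.S_cut[OF _ s4 s3]) (use n h in \<open>auto simp: nfseq_def\<close>)
  then show ?case using N_signE(3) h(1) by (auto intro: Sq.S_cut nfG)
next
  case (N_signI M K)
  obtain x y where h: "nf oplus RE (Sign M K) = Sign x y" "ra oplus RE M x" "ra oplus RE K y"
    "normal oplus RE x" "normal oplus RE y" "normal oplus RE (Sign x y)" using nf_Sign by blast
  show ?case unfolding h(1)
    using nfG[of \<Gamma> "Sign M K"] h(1) Sq_replace[OF N_signI(3) h(4) apx2[OF h(2)]] Sq_replace[OF N_signI(4) h(5) apx2[OF h(3)]]
    by (auto intro: Sq.S_signR)
next
  case (N_blindE1 M K)
  let ?G = "nf oplus RE ` \<Gamma>"
  obtain x y where h: "nf oplus RE (Blind M K) = Blind x y" "ra oplus RE M x" "ra oplus RE K y"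
    "normal oplus RE x" "normal oplus RE y" "normal oplus RE (Blind x y)" using nf_Blind by blast
  have n: "\<forall>N\<in>?G. normal oplus RE N" "normal oplus RE (nf oplus RE M)" using nf_normal by auto
  have s1: "Sq ar oplus RE (insert (Blind x y) ?G) y"
    by (rule Sq_replace[OF Sq_weak[OF N_blindE1(4)] h(5) apx2[OF h(3)]]) (rule h(6))
  have s2: "Sq ar oplus RE (insert y (insert x (insert (Blind x y) ?G))) (nf oplus RE M)"
    by (rule Sq_idX[where X=x]) (use n h apx1 in \<open>auto simp: nfseq_def\<close>)
  have "Sq ar oplus RE (insert (Blind x y) ?G) (nf oplus RE M)"
    by (rule Sq.S_blindL1[OF _ s1 s2]) (use n h in \<open>auto simp: nfseq_def\<close>)
  then show ?case using N_blindE1(3) h(1) by (auto intro: Sq.S_cut nfG)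
next
  case (N_blindI M K)
  obtain x y where h: "nf oplus RE (Blind M K) = Blind x y" "ra oplus RE M x" "ra oplus RE K y"
    "normal oplus RE x" "normal oplus RE y" "normal oplus RE (Blind x y)" using nf_Blind by blast
  show ?case unfolding h(1)
    using nfG[of \<Gamma> "Blind M K"] h(1) Sq_replace[OF N_blindI(3) h(4) apx2[OF h(2)]] Sq_replace[OF N_blindI(4) h(5) apx2[OF h(3)]]
    by (auto intro: Sq.S_blindR)
next
  case (N_blindE2 M R K)
  let ?G = "nf oplus RE ` \<Gamma>"
  obtain x y where h: "nf oplus RE (Sign (Blind M R) K) = Sign x y" "ra oplus RE (Blind M R) x" "ra oplus RE K y"
    "normal oplus RE x" "normal oplus RE y" "normal oplus RE (Sign x y)" using nf_Sign by blast
  obtain x1 r1 where hx: "x = Blind x1 r1" "ra oplus RE M x1" "ra oplus RE R r1"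
    using ra_shape[OF E, of BB M R x] h(2) by auto
  have nx1: "normal oplus RE x1" "normal oplus RE r1" using h(4) hx(1) normal_mk[OF E, of BB x1 r1] by auto
  have nS: "normal oplus RE (Sign x1 y)" using nx1 h(5) normal_mk[OF E, of BS x1 y] by simp
  obtain u v where g: "nf oplus RE (Sign M K) = Sign u v" "ra oplus RE M u" "ra oplus RE K v"
    "normal oplus RE u" "normal oplus RE v" "normal oplus RE (Sign u v)" using nf_Sign by blast
  have n: "\<forall>N\<in>?G. normal oplus RE N" using nf_normal by auto
  have ux: "approxE oplus RE u x1" using g(2) hx(2) ra_approxE approxE_sym approxE_trans by blast
  have vy: "approxE oplus RE v y" using g(3) h(3) ra_approxE approxE_sym approxE_trans by blast
  have uvxy: "approxE oplus RE (Sign u v) (Sign x1 y)"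
  proof -
    have "approxE oplus RE (mk BS u v) (mk BS x1 v)" by (rule L1.approxE[OF ux])
    moreover have "approxE oplus RE (mk BS x1 v) (mk BS x1 y)" by (rule L2.approxE[OF vy])
    ultimately show ?thesis using approxE_trans by simp
  qed
  have s1: "Sq ar oplus RE (insert (Sign (Blind x1 r1) y) ?G) r1"
    by (rule Sq_replace[OF Sq_weak[OF N_blindE2(4)] nx1(2) apx2[OF hx(3)]]) (use h hx in simp)
  have s2: "Sq ar oplus RE (insert r1 (insert (Sign x1 y) (insert (Sign (Blind x1 r1) y) ?G))) (Sign u v)"
    by (rule Sq_idX[where X="Sign x1 y"]) (use n h hx nx1 nS g uvxy in \<open>auto simp: nfseq_def\<close>)
  have "Sq ar oplus RE (insert (Sign (Blind x1 r1) y) ?G) (Sign u v)"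
    by (rule Sq.S_blindL2[OF _ s1 s2]) (use n h hx g in \<open>auto simp: nfseq_def\<close>)
  then show ?case using N_blindE2(3) h(1) hx(1) g(1) nfG[of \<Gamma> "Sign M K"] Sq.S_cut by metis
next
  case (N_gI Ms g)
  let ?G = "nf oplus RE ` \<Gamma>"
  let ?xs = "map (nf oplus RE) Ms"
  have all: "\<forall>x\<in>set ?xs. Sq ar oplus RE ?G x" using N_gI(2) by auto
  have c: "Fn g ?xs \<in> ectx_cl ar (?G \<union> set ?xs)"
    by (rule ectx_cl.fn) (use N_gI(1) in \<open>auto intro: ectx_cl.hole\<close>)
  have a1: "approxE oplus RE (Fn g Ms) (Fn g ?xs)"
    by (rule approxE_Fn) (auto simp: list_all2_conv_all_nth nf_approx[OF E])
  have a: "approxE oplus RE (nf oplus RE (Fn g Ms)) (Fn g ?xs)"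
    using nf_appr a1 approxE_trans by blast
  have "Sq ar oplus RE (?G \<union> set ?xs) (nf oplus RE (Fn g Ms))"
    by (rule Sq.S_id[OF _ c a]) (use nf_normal in \<open>auto simp: nfseq_def\<close>)
  then show ?case using Sq_multicut[OF all _ nfG] by blast
next
  case (N_approx N M)
  have "approxE oplus RE (nf oplus RE M) (nf oplus RE N)"
  proof -
    have "approxE oplus RE M N" using N_approx by blast
    then show ?thesis using nf_appr[of M] nf_approx[OF E, of N] approxE_trans by blast
  qed
  moreover have "Sq ar oplus RE (nf oplus RE ` \<Gamma>) (nf oplus RE N)" using N_approx by blast
  ultimately show ?case using Sq_replace nf_normal by blast
qed

end


theorem proposition1:
  fixes ar :: "'f \<Rightarrow> nat" and oplus :: "'f option" and RE :: "('f trm \<times> 'f trm) set"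
    and \<Gamma> :: "'f trm set" and M :: "'f trm"
  assumes "E_theory ar oplus RE"
    and "finite \<Gamma>"
    and "\<forall>N\<in>\<Gamma>. ground N \<and> wf_trm ar N"
    and "ground M" and "wf_trm ar M"
  shows "Nd ar oplus RE \<Gamma> M \<longleftrightarrow> Sq ar oplus RE (nf oplus RE ` \<Gamma>) (nf oplus RE M)"
proof
  assume "Nd ar oplus RE \<Gamma> M"
  then show "Sq ar oplus RE (nf oplus RE ` \<Gamma>) (nf oplus RE M)" using completeness[OF assms(1)] by blast
next
  assume s: "Sq ar oplus RE (nf oplus RE ` \<Gamma>) (nf oplus RE M)"
  have "\<forall>N\<in>nf oplus RE ` \<Gamma>. Nd ar oplus RE \<Gamma> N"
    using Nd.N_id Nd.N_approx nf_appr[OF assms(1)] by blast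
  then have "Nd ar oplus RE \<Gamma> (nf oplus RE M)" using soundness[OF s] by blast
  then show "Nd ar oplus RE \<Gamma> M" using Nd.N_approx nf_approx[OF assms(1)] by blast
qed

end
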